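(* Let $\mathcal{G}$ be a connected undirected unweighted graph with $n\ge 2$ vertices, $s\ne t$ vertices, $\epsilon\in(0,1)$, and let $L$ be an integer with $L\ge 2\kappa(\mathcal{L})\log\frac{n}{\epsilon}$. Then $r_{\mathcal{G},L}(s,t)\approx_\epsilon r_{\mathcal{G}}(s,t)$.
   Context: $\mathbf{D}$ is the degree matrix, $\mathbf{A}$ the adjacency matrix, $\mathbf{L}=\mathbf{D}-\mathbf{A}$, $\mathbf{P}=\mathbf{A}\mathbf{D}^{-1}$, $\mathcal{L}=\mathbf{D}^{-1/2}\mathbf{L}\mathbf{D}^{-1/2}$ the normalized Laplacian, and $\kappa(\mathcal{L})=\lambda_{\max}(\mathcal{L})/\lambda_2(\mathcal{L})$ with $\lambda_2(\mathcal{L})$ the smallest nonzero eigenvalue. $r_{\mathcal{G}}(s,t)=(\mathbf{e}_s-\mathbf{e}_t)^T\mathbf{L}^\dagger(\mathbf{e}_s-\mathbf{e}_t)$ and the $L$-step truncated effective resistance is $r_{\mathcal{G},L}(s,t)=\frac{1}{2}(\mathbf{e}_s-\mathbf{e}_t)^T\mathbf{D}^{-1}\sum_{l=0}^{L}(\frac12\mathbf{I}+\frac12\mathbf{P})^l(\mathbf{e}_s-\mathbf{e}_t)$. $x\approx_\epsilon y$ means $(1-\epsilon)y\le x\le(1+\epsilon)y$; $\log$ is the natural logarithm. *)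

theory Defs
  imports "HOL-Analysis.Analysis"
begin

definition simple_graph :: "('n::finite \<Rightarrow> 'n \<Rightarrow> bool) \<Rightarrow> bool" where
  "simple_graph E \<longleftrightarrow> (\<forall>u v. E u v \<longrightarrow> E v u) \<and> (\<forall>u. \<not> E u u)"

definition connected_graph :: "('n::finite \<Rightarrow> 'n \<Rightarrow> bool) \<Rightarrow> bool" where
  "connected_graph E \<longleftrightarrow> (\<forall>u v. (\<lambda>x y. E x y)\<^sup>*\<^sup>* u v)"

definition adj_mat :: "('n::finite \<Rightarrow> 'n \<Rightarrow> bool) \<Rightarrow> real^'n^'n" where
  "adj_mat E = (\<chi> i j. if E i j then 1 else 0)"

definition degree :: "('n::finite \<Rightarrow> 'n \<Rightarrow> bool) \<Rightarrow> 'n \<Rightarrow> real" where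
  "degree E u = real (card {v. E u v})"

definition diag_mat :: "('n::finite \<Rightarrow> real) \<Rightarrow> real^'n^'n" where
  "diag_mat d = (\<chi> i j. if i = j then d i else 0)"

definition deg_mat :: "('n::finite \<Rightarrow> 'n \<Rightarrow> bool) \<Rightarrow> real^'n^'n" where
  "deg_mat E = diag_mat (degree E)"

definition lap_mat :: "('n::finite \<Rightarrow> 'n \<Rightarrow> bool) \<Rightarrow> real^'n^'n" where
  "lap_mat E = deg_mat E - adj_mat E"

definition walk_mat :: "('n::finite \<Rightarrow> 'n \<Rightarrow> bool) \<Rightarrow> real^'n^'n" where
  "walk_mat E = adj_mat E ** diag_mat (\<lambda>u. 1 / degree E u)"

definition norm_lap :: "('n::finite \<Rightarrow> 'n \<Rightarrow> bool) \<Rightarrow> real^'n^'n" where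
  "norm_lap E = diag_mat (\<lambda>u. 1 / sqrt (degree E u)) ** lap_mat E
                 ** diag_mat (\<lambda>u. 1 / sqrt (degree E u))"

definition eigenvalues :: "real^'n::finite^'n \<Rightarrow> real set" where
  "eigenvalues M = {c. \<exists>v. v \<noteq> 0 \<and> M *v v = c *\<^sub>R v}"

definition lambda_max :: "real^'n^'n \<Rightarrow> real" where
  "lambda_max M = Max (eigenvalues M)"

definition lambda_2 :: "real^'n^'n \<Rightarrow> real" where
  "lambda_2 M = Min (eigenvalues M - {0})"

definition cond_num :: "real^'n^'n \<Rightarrow> real" where
  "cond_num M = lambda_max M / lambda_2 M"

definition pinv :: "real^'n^'n \<Rightarrow> real^'n^'n" where
  "pinv A = (THE X. A ** X ** A = A \<and> X ** A ** X = X \<and>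
                    transpose (A ** X) = A ** X \<and> transpose (X ** A) = X ** A)"

primrec mpow :: "real^'n^'n \<Rightarrow> nat \<Rightarrow> real^'n^'n" where
  "mpow M 0 = mat 1"
| "mpow M (Suc k) = M ** mpow M k"

definition unitv :: "'n::finite \<Rightarrow> real^'n" where
  "unitv s = (\<chi> i. if i = s then 1 else 0)"

definition eff_res :: "('n::finite \<Rightarrow> 'n \<Rightarrow> bool) \<Rightarrow> 'n \<Rightarrow> 'n \<Rightarrow> real" where
  "eff_res E s t = (let b = unitv s - unitv t in b \<bullet> (pinv (lap_mat E) *v b))"

definition trunc_eff_res :: "('n::finite \<Rightarrow> 'n \<Rightarrow> bool) \<Rightarrow> nat \<Rightarrow> 'n \<Rightarrow> 'n \<Rightarrow> real" where
  "trunc_eff_res E L s t = (let b = unitv s - unitv t;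
      Q = (1/2) *\<^sub>R mat 1 + (1/2) *\<^sub>R walk_mat E in
      (1/2) * (b \<bullet> ((diag_mat (\<lambda>u. 1 / degree E u) ** (\<Sum>l\<in>{0..L}. mpow Q l)) *v b)))"

definition approx_eps :: "real \<Rightarrow> real \<Rightarrow> real \<Rightarrow> bool" where
  "approx_eps \<epsilon> x y \<longleftrightarrow> (1 - \<epsilon>) * y \<le> x \<and> x \<le> (1 + \<epsilon>) * y"

end

theory Submission
  imports Defs
begin

lemma sym_dot:
  fixes A :: "real^'n^'n"
  assumes "transpose A = A"
  shows "(A *v u) \<bullet> v = u \<bullet> (A *v v)"
proof -
  have "(A *v u) = u v* transpose A" by simp
  also have "\<dots> = u v* A" using assms by simp
  finally show ?thesis by (simp add: dot_lmul_matrix)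
qed

lemma quad_zero:
  fixes a c :: real
  assumes "a \<ge> 0" and "\<And>t. 0 \<le> 2*t*a + t^2*c"
  shows "a = 0"
proof (rule ccontr)
  assume "a \<noteq> 0"
  hence ap: "a > 0" using assms(1) by simp
  define k where "k = \<bar>c\<bar> + 1"
  have p: "k > 0" unfolding k_def by simp
  define t where "t = - a / k"
  have tk: "t * k = - a" unfolding t_def using p by simp
  have "0 \<le> 2*t*a + t^2*c" by (rule assms(2))
  hence "0 \<le> (2*t*a + t^2*c) * k^2" by simp
  also have "\<dots> = 2*a*(t*k)*k + (t*k)^2*c" by (simp add: power2_eq_square algebra_simps)
  also have "\<dots> = a^2 * (c - 2*k)" unfolding tk by (simp add: power2_eq_square algebra_simps)
  finally have "0 \<le> c - 2*k" using ap
    by (simp add: zero_le_mult_iff)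
  thus False unfolding k_def by (cases "c \<ge> 0") auto
qed

lemma cont_quad:
  fixes A :: "real^'n^'n"
  shows "continuous_on S (\<lambda>u. u \<bullet> (A *v u))"
proof -
  have "continuous_on S (\<lambda>u. A *v u)"
    by (rule linear_continuous_on) (simp add: linear_conv_bounded_linear)
  then show ?thesis by (intro continuous_intros)
qed

lemma spectral_sub:
  fixes A :: "real^'n^'n"
  assumes sym: "transpose A = A"
  shows "subspace U \<Longrightarrow> (\<forall>u\<in>U. A *v u \<in> U) \<Longrightarrow>
    \<exists>B mu. finite B \<and> B \<subseteq> U \<and> (\<forall>b\<in>B. norm b = 1 \<and> A *v b = mu b *\<^sub>R b)
      \<and> pairwise orthogonal B \<and> (\<forall>x\<in>U. x = (\<Sum>b\<in>B. (x \<bullet> b) *\<^sub>R b))"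
proof (induction "dim U" arbitrary: U rule: less_induct)
  case less
  show ?case
  proof (cases "U = {0}")
    case True
    then show ?thesis by (intro exI[of _ "{}"]) auto
  next
    case False
    then obtain w where w: "w \<in> U" "w \<noteq> 0" using less.prems(1) subspace_0 by blast
    let ?S = "U \<inter> sphere 0 1"
    have cS: "compact ?S"
      by (intro closed_Int_compact closed_subspace less.prems compact_sphere)
    have "(1/norm w) *\<^sub>R w \<in> ?S" using w less.prems(1) by (simp add: subspace_scale)
    hence neS: "?S \<noteq> {}" by blast
    obtain v where v: "v \<in> ?S" "\<forall>y\<in>?S. v \<bullet> (A *v v) \<le> y \<bullet> (A *v y)"
      using continuous_attains_inf[OF cS neS cont_quad] by blast
    have vU: "v \<in> U" and vn: "norm v = 1" using v(1) by auto
    have vv: "v \<bullet> v = 1" using vn by (simp add: dot_square_norm)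
    define \<mu> where "\<mu> = v \<bullet> (A *v v)"
    have Q: "\<mu> * (u \<bullet> u) \<le> u \<bullet> (A *v u)" if u: "u \<in> U" for u
    proof (cases "u = 0")
      case True then show ?thesis by simp
    next
      case False
      let ?u = "(1/norm u) *\<^sub>R u"
      have "?u \<in> ?S" using u False less.prems(1) by (simp add: subspace_scale)
      hence "\<mu> \<le> ?u \<bullet> (A *v ?u)" using v(2) unfolding \<mu>_def by blast
      also have "\<dots> = (u \<bullet> (A *v u)) / (norm u)^2"
        by (simp add: matrix_vector_mult_scaleR power2_eq_square)
      finally have "\<mu> * (norm u)^2 \<le> u \<bullet> (A *v u)" using False
        by (simp add: pos_le_divide_eq)
      then show ?thesis by (simp add: dot_square_norm)
    qed
    define r where "r = A *v v - \<mu> *\<^sub>R v"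
    have rU: "r \<in> U" unfolding r_def using less.prems vU
      by (simp add: subspace_diff subspace_scale)
    have vr: "v \<bullet> r = 0" unfolding r_def using vv
      by (simp add: inner_diff_right \<mu>_def)
    have rAv: "r \<bullet> (A *v v) = r \<bullet> r"
    proof -
      have "A *v v = r + \<mu> *\<^sub>R v" unfolding r_def by simp
      then show ?thesis using vr by (simp add: inner_add_right inner_commute)
    qed
    have vAr: "v \<bullet> (A *v r) = r \<bullet> (A *v v)"
      using sym_dot[OF sym, of v r] by (simp add: inner_commute)
    have ineq: "0 \<le> 2*t*(r \<bullet> r) + t^2*(r \<bullet> (A *v r) - \<mu> * (r \<bullet> r))" for t
    proof -
      have "v + t *\<^sub>R r \<in> U" using vU rU less.prems(1) by (simp add: subspace_add subspace_scale)
      note q = Q[OF this]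
      have e1: "(v + t *\<^sub>R r) \<bullet> (v + t *\<^sub>R r) = 1 + t^2 * (r \<bullet> r)"
        using vv vr by (simp add: inner_add_left inner_add_right inner_commute power2_eq_square)
      have e2: "(v + t *\<^sub>R r) \<bullet> (A *v (v + t *\<^sub>R r)) = \<mu> + 2*t*(r \<bullet> r) + t^2 * (r \<bullet> (A *v r))"
        using vAr rAv by (simp add: matrix_vector_right_distrib matrix_vector_mult_scaleR
            inner_add_left inner_add_right inner_commute power2_eq_square \<mu>_def algebra_simps)
      have "\<mu> * (1 + t^2 * (r \<bullet> r)) \<le> \<mu> + 2*t*(r \<bullet> r) + t^2 * (r \<bullet> (A *v r))"
        using q unfolding e1 e2 .
      then show ?thesis by (simp add: algebra_simps)
    qed
    have "r \<bullet> r = 0" by (rule quad_zero[OF _ ineq]) simp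
    hence eig: "A *v v = \<mu> *\<^sub>R v" unfolding r_def by simp
    define U' where "U' = U \<inter> {y. v \<bullet> y = 0}"
    have sU': "subspace U'" unfolding U'_def
      by (intro subspace_inter less.prems) (auto simp: subspace_def inner_add_right)
    have invU': "\<forall>u\<in>U'. A *v u \<in> U'"
    proof
      fix u assume "u \<in> U'"
      then have "u \<in> U" "v \<bullet> u = 0" unfolding U'_def by auto
      moreover have "v \<bullet> (A *v u) = (A *v v) \<bullet> u" using sym_dot[OF sym, of v u] by simp
      ultimately show "A *v u \<in> U'" using less.prems(2) eig unfolding U'_def by auto
    qed
    have vnU': "v \<notin> U'" unfolding U'_def using vv by auto
    have "U' \<subset> U" using vU vnU' unfolding U'_def by blast
    moreover have "span U' = U'" "span U = U" using sU' less.prems(1) by (metis span_eq_iff)+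
    ultimately have "dim U' < dim U" by (metis dim_psubset)
    from less.hyps[OF this sU' invU'] obtain B' mu' where B':
      "finite B'" "B' \<subseteq> U'" "\<forall>b\<in>B'. norm b = 1 \<and> A *v b = mu' b *\<^sub>R b"
      "pairwise orthogonal B'" "\<forall>x\<in>U'. x = (\<Sum>b\<in>B'. (x \<bullet> b) *\<^sub>R b)" by blast
    have vB: "v \<notin> B'" using B'(2) vnU' by blast
    have orth: "v \<bullet> b = 0" if "b \<in> B'" for b using that B'(2) unfolding U'_def by auto
    show ?thesis
    proof (intro exI[of _ "insert v B'"] exI[of _ "mu'(v := \<mu>)"] conjI)
      show "finite (insert v B')" using B' by simp
      show "insert v B' \<subseteq> U" using B'(2) vU unfolding U'_def by auto
      show "\<forall>b\<in>insert v B'. norm b = 1 \<and> A *v b = (mu'(v := \<mu>)) b *\<^sub>R b"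
        using B'(3) vn eig vB by auto
      show "pairwise orthogonal (insert v B')"
        using B'(4) orth by (auto simp: pairwise_insert orthogonal_def inner_commute)
      show "\<forall>x\<in>U. x = (\<Sum>b\<in>insert v B'. (x \<bullet> b) *\<^sub>R b)"
      proof
        fix x assume xU: "x \<in> U"
        define x' where "x' = x - (x \<bullet> v) *\<^sub>R v"
        have "x' \<in> U'" unfolding U'_def x'_def using xU vU less.prems(1) vv
          by (auto simp: subspace_diff subspace_scale inner_diff_right inner_commute)
        hence "x' = (\<Sum>b\<in>B'. (x' \<bullet> b) *\<^sub>R b)" using B'(5) by blast
        also have "\<dots> = (\<Sum>b\<in>B'. (x \<bullet> b) *\<^sub>R b)"
          by (intro sum.cong refl) (simp add: x'_def inner_diff_left orth)
        finally have "x = (x \<bullet> v) *\<^sub>R v + (\<Sum>b\<in>B'. (x \<bullet> b) *\<^sub>R b)"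
          unfolding x'_def by (simp add: algebra_simps)
        then show "x = (\<Sum>b\<in>insert v B'. (x \<bullet> b) *\<^sub>R b)" using B'(1) vB by simp
      qed
    qed
  qed
qed

lemma spectral:
  fixes A :: "real^'n^'n"
  assumes sym: "transpose A = A"
  shows "\<exists>B mu. finite B \<and> (\<forall>b\<in>B. norm b = 1 \<and> A *v b = mu b *\<^sub>R b)
      \<and> pairwise orthogonal B \<and> (\<forall>x. x = (\<Sum>b\<in>B. (x \<bullet> b) *\<^sub>R b))"
  using spectral_sub[OF sym, of UNIV] by auto

lemma diag_mv: "diag_mat f *v x = (\<chi> i. f i * x $ i)"
  by (simp add: diag_mat_def matrix_vector_mult_def vec_eq_iff if_distrib if_distribR sum.delta cong: if_cong)

lemma diag_inner: "(diag_mat f *v x) \<bullet> y = x \<bullet> (diag_mat f *v y)"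
  by (simp add: diag_mv inner_vec_def mult_ac)

lemma diag_diag: "diag_mat f *v (diag_mat g *v x) = diag_mat (\<lambda>i. f i * g i) *v x"
  by (simp add: diag_mv mult_ac)

lemma diag_left_entry: "(diag_mat f ** M) $ i $ j = f i * M $ i $ j"
  by (simp add: diag_mat_def matrix_matrix_mult_def if_distrib if_distribR sum.delta cong: if_cong)

lemma diag_right_entry: "(M ** diag_mat f) $ i $ j = M $ i $ j * f j"
  by (simp add: diag_mat_def matrix_matrix_mult_def if_distrib if_distribR sum.delta' cong: if_cong)

lemma mv_sum: "A *v (\<Sum>b\<in>S. f b) = (\<Sum>b\<in>S. A *v f b)"
proof (induction S rule: infinite_finite_induct)
  case (insert x F) then show ?case by (simp add: matrix_vector_right_distrib)
qed auto

lemma sum_mv: "(\<Sum>b\<in>S. f b) *v w = (\<Sum>b\<in>S. f b *v w)"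
proof (induction S rule: infinite_finite_induct)
  case (insert x F) then show ?case by (simp add: matrix_vector_mult_add_rdistrib)
qed auto

lemma mm_diff_l: "(A::real^'n^'n) ** (B - C) = A ** B - A ** C"
  by (vector matrix_matrix_mult_def sum_subtractf right_diff_distrib)
lemma mm_diff_r: "((A::real^'n^'n) - B) ** C = A ** C - B ** C"
  by (vector matrix_matrix_mult_def sum_subtractf left_diff_distrib)
lemma mm_add_r: "((A::real^'n^'n) + B) ** C = A ** C + B ** C"
  by (vector matrix_matrix_mult_def sum.distrib distrib_right)
lemma mm_scale_l: "(k *\<^sub>R (A::real^'n^'n)) ** B = k *\<^sub>R (A ** B)"
  by (simp add: scalar_matrix_assoc)
lemma mm_scale_r: "(A::real^'n^'n) ** (k *\<^sub>R B) = k *\<^sub>R (A ** B)"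
  by (simp add: matrix_scalar_ac scalar_matrix_assoc)
lemma transpose_diff: "transpose ((A::real^'n^'n) - B) = transpose A - transpose B"
  by (simp add: transpose_def vec_eq_iff)
lemma transpose_add: "transpose ((A::real^'n^'n) + B) = transpose A + transpose B"
  by (simp add: transpose_def vec_eq_iff)

lemma penrose_unique:
  fixes A X Y :: "real^'n^'n"
  assumes "A ** X ** A = A" "X ** A ** X = X" "transpose (A ** X) = A ** X" "transpose (X ** A) = X ** A"
    and "A ** Y ** A = A" "Y ** A ** Y = Y" "transpose (A ** Y) = A ** Y" "transpose (Y ** A) = Y ** A"
  shows "X = Y"
proof -
  have 1: "X = X ** (A ** X)" using assms(2) by (simp add: matrix_mul_assoc)
  also have "\<dots> = X ** transpose (A ** X)" using assms(3) by simp
  also have "\<dots> = X ** transpose X ** transpose A" by (simp add: matrix_transpose_mul matrix_mul_assoc)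
  also have "\<dots> = X ** transpose X ** transpose (A ** Y ** A)" using assms(5) by simp
  also have "\<dots> = X ** transpose (A ** X) ** transpose (A ** Y)"
    by (simp add: matrix_transpose_mul matrix_mul_assoc)
  also have "\<dots> = X ** (A ** X) ** (A ** Y)" using assms(3,7) by simp
  also have "\<dots> = X ** A ** Y" using assms(2) by (simp add: matrix_mul_assoc)
  finally have X: "X = X ** A ** Y" .
  have "Y = (Y ** A) ** Y" using assms(6) by (simp add: matrix_mul_assoc)
  also have "\<dots> = transpose (Y ** A) ** Y" using assms(8) by simp
  also have "\<dots> = transpose A ** transpose Y ** Y" by (simp add: matrix_transpose_mul matrix_mul_assoc)
  also have "\<dots> = transpose (A ** X ** A) ** transpose Y ** Y" using assms(1) by simp
  also have "\<dots> = transpose (X ** A) ** transpose (Y ** A) ** Y"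
    by (simp add: matrix_transpose_mul matrix_mul_assoc)
  also have "\<dots> = (X ** A) ** (Y ** A) ** Y" using assms(4,8) by simp
  also have "\<dots> = X ** A ** Y" by (metis assms(6) matrix_mul_assoc)
  finally show ?thesis using X by simp
qed

lemma deg_sum: "degree E i = (\<Sum>j\<in>UNIV. if E i j then 1 else 0)"
  by (simp add: degree_def sum.If_cases)

lemma deg_pos:
  fixes E :: "'n::finite \<Rightarrow> 'n \<Rightarrow> bool"
  assumes "connected_graph E" "CARD('n) \<ge> 2"
  shows "degree E u > 0"
proof -
  have "\<exists>v. v \<noteq> u"
  proof (rule ccontr)
    assume "\<not> (\<exists>v. v \<noteq> u)"
    hence "UNIV = {u}" by auto
    hence "card (UNIV::'n set) = card {u}" by (simp only:)
    hence "CARD('n) = 1" by simp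
    thus False using assms(2) by simp
  qed
  then obtain v where v: "v \<noteq> u" by blast
  have "E\<^sup>*\<^sup>* u v" using assms(1) unfolding connected_graph_def by blast
  then obtain y where "E u y" using v by (cases rule: converse_rtranclpE) auto
  hence "{w. E u w} \<noteq> {}" by blast
  thus ?thesis unfolding degree_def by (simp add: card_gt_0_iff)
qed

lemma adj_sym: "simple_graph E \<Longrightarrow> E i j = E j i"
  unfolding simple_graph_def by blast

lemma adj_mv: "(adj_mat E *v u) $ i = (\<Sum>j\<in>UNIV. (if E i j then 1 else 0) * u $ j)"
  by (simp add: adj_mat_def matrix_vector_mult_def)

lemma deg_mv: "(deg_mat E *v u) $ i = degree E i * u $ i"
  by (simp add: deg_mat_def diag_mv)

lemma swap_sym:
  fixes a :: "'n::finite \<Rightarrow> 'n \<Rightarrow> real"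
  assumes "\<And>i j. a i j = a j i"
  shows "(\<Sum>i\<in>UNIV. \<Sum>j\<in>UNIV. a i j * g j) = (\<Sum>i\<in>UNIV. \<Sum>j\<in>UNIV. a i j * g i)"
  by (subst sum.swap) (simp add: assms)

lemma quad_forms:
  fixes E :: "'n::finite \<Rightarrow> 'n \<Rightarrow> bool"
  assumes sg: "simple_graph E"
  defines "a \<equiv> \<lambda>i j. if E i j then 1 else (0::real)"
  shows "2 * (u \<bullet> (lap_mat E *v u)) = (\<Sum>i\<in>UNIV. \<Sum>j\<in>UNIV. a i j * (u$i - u$j)^2)"
    and "2 * (u \<bullet> (deg_mat E *v u) + u \<bullet> (adj_mat E *v u)) = (\<Sum>i\<in>UNIV. \<Sum>j\<in>UNIV. a i j * (u$i + u$j)^2)"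
proof -
  have as: "\<And>i j. a i j = a j i" unfolding a_def using adj_sym[OF sg] by metis
  have sw: "(\<Sum>i\<in>UNIV. \<Sum>j\<in>UNIV. a i j * (u$j)^2) = (\<Sum>i\<in>UNIV. \<Sum>j\<in>UNIV. a i j * (u$i)^2)"
    by (rule swap_sym[OF as])
  have D: "u \<bullet> (deg_mat E *v u) = (\<Sum>i\<in>UNIV. \<Sum>j\<in>UNIV. a i j * (u$i)^2)"
    by (simp add: inner_vec_def deg_mv deg_sum a_def sum_distrib_right sum_distrib_left
        power2_eq_square mult_ac)
  have A: "u \<bullet> (adj_mat E *v u) = (\<Sum>i\<in>UNIV. \<Sum>j\<in>UNIV. a i j * (u$i * u$j))"
    by (simp add: inner_vec_def adj_mv a_def sum_distrib_left mult_ac)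
  have L: "u \<bullet> (lap_mat E *v u) = u \<bullet> (deg_mat E *v u) - u \<bullet> (adj_mat E *v u)"
    by (simp add: lap_mat_def matrix_vector_mult_diff_rdistrib inner_diff_right)
  have e1: "(\<Sum>i\<in>UNIV. \<Sum>j\<in>UNIV. a i j * (u$i - u$j)^2) =
     (\<Sum>i\<in>UNIV. \<Sum>j\<in>UNIV. a i j * (u$i)^2) + (\<Sum>i\<in>UNIV. \<Sum>j\<in>UNIV. a i j * (u$j)^2)
     - 2 * (\<Sum>i\<in>UNIV. \<Sum>j\<in>UNIV. a i j * (u$i * u$j))"
    by (simp add: power2_eq_square algebra_simps sum.distrib sum_subtractf sum_distrib_left)
  have e2: "(\<Sum>i\<in>UNIV. \<Sum>j\<in>UNIV. a i j * (u$i + u$j)^2) =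
     (\<Sum>i\<in>UNIV. \<Sum>j\<in>UNIV. a i j * (u$i)^2) + (\<Sum>i\<in>UNIV. \<Sum>j\<in>UNIV. a i j * (u$j)^2)
     + 2 * (\<Sum>i\<in>UNIV. \<Sum>j\<in>UNIV. a i j * (u$i * u$j))"
    by (simp add: power2_eq_square algebra_simps sum.distrib sum_distrib_left)
  show "2 * (u \<bullet> (lap_mat E *v u)) = (\<Sum>i\<in>UNIV. \<Sum>j\<in>UNIV. a i j * (u$i - u$j)^2)"
    unfolding e1 L D A sw by simp
  show "2 * (u \<bullet> (deg_mat E *v u) + u \<bullet> (adj_mat E *v u)) = (\<Sum>i\<in>UNIV. \<Sum>j\<in>UNIV. a i j * (u$i + u$j)^2)"
    unfolding e2 D A sw by simp
qed

lemma lap_psd: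
  assumes "simple_graph E"
  shows "0 \<le> u \<bullet> (lap_mat E *v u)"
proof -
  have "0 \<le> 2 * (u \<bullet> (lap_mat E *v u))" unfolding quad_forms(1)[OF assms]
    by (intro sum_nonneg) auto
  thus ?thesis by simp
qed

lemma adjdeg_psd:
  assumes "simple_graph E"
  shows "0 \<le> u \<bullet> (deg_mat E *v u) + u \<bullet> (adj_mat E *v u)"
proof -
  have "0 \<le> 2 * (u \<bullet> (deg_mat E *v u) + u \<bullet> (adj_mat E *v u))" unfolding quad_forms(2)[OF assms]
    by (intro sum_nonneg) auto
  thus ?thesis by simp
qed

definition Dh :: "('n::finite \<Rightarrow> 'n \<Rightarrow> bool) \<Rightarrow> real^'n^'n" where
  "Dh E = diag_mat (\<lambda>u. sqrt (degree E u))"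
definition Dhi :: "('n::finite \<Rightarrow> 'n \<Rightarrow> bool) \<Rightarrow> real^'n^'n" where
  "Dhi E = diag_mat (\<lambda>u. 1 / sqrt (degree E u))"

lemma nl_mv: "norm_lap E *v v = Dhi E *v (lap_mat E *v (Dhi E *v v))"
  by (simp add: norm_lap_def Dhi_def matrix_vector_mul_assoc matrix_mul_assoc)

lemma Dh_Dhi:
  assumes dp: "\<And>u. degree E u > 0"
  shows "Dh E *v (Dhi E *v v) = v" "Dhi E *v (Dh E *v v) = v"
proof -
  have "\<And>i. degree E i \<noteq> 0" using dp by (metis less_irrefl)
  then show "Dh E *v (Dhi E *v v) = v" "Dhi E *v (Dh E *v v) = v"
    by (simp_all add: Dh_def Dhi_def diag_mv vec_eq_iff)
qed

lemma nl_sym: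
  assumes sg: "simple_graph E"
  shows "transpose (norm_lap E) = norm_lap E"
proof -
  have "lap_mat E $ i $ j = lap_mat E $ j $ i" for i j
    using adj_sym[OF sg, of i j]
    by (simp add: lap_mat_def deg_mat_def diag_mat_def adj_mat_def)
  then show ?thesis
    unfolding norm_lap_def
    by (simp add: transpose_def vec_eq_iff diag_left_entry diag_right_entry mult_ac)
qed

lemma nl_quad:
  assumes sg: "simple_graph E" and dp: "\<And>u. degree E u > 0"
  shows "0 \<le> v \<bullet> (norm_lap E *v v)" "v \<bullet> (norm_lap E *v v) \<le> 2 * (v \<bullet> v)"
proof -
  define u where "u = Dhi E *v v"
  have q: "v \<bullet> (norm_lap E *v v) = u \<bullet> (lap_mat E *v u)"
    unfolding nl_mv u_def Dhi_def by (metis diag_inner inner_commute)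
  then show "0 \<le> v \<bullet> (norm_lap E *v v)" using lap_psd[OF sg] by simp
  have vv: "v \<bullet> v = u \<bullet> (deg_mat E *v u)"
  proof -
    have "v $ i * v $ i = v $ i / sqrt (degree E i) * (degree E i * v $ i / sqrt (degree E i))" for i
      using dp[of i] by (simp add: field_simps)
    then show ?thesis unfolding u_def Dhi_def
      by (simp add: inner_vec_def deg_mv diag_mv)
  qed
  have L: "u \<bullet> (lap_mat E *v u) = u \<bullet> (deg_mat E *v u) - u \<bullet> (adj_mat E *v u)"
    by (simp add: lap_mat_def matrix_vector_mult_diff_rdistrib inner_diff_right)
  show "v \<bullet> (norm_lap E *v v) \<le> 2 * (v \<bullet> v)"
    using adjdeg_psd[OF sg, of u] unfolding q vv L by simp
qed

lemma nl_eig_range: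
  assumes sg: "simple_graph E" and dp: "\<And>u. degree E u > 0"
  assumes "c \<in> eigenvalues (norm_lap E)"
  shows "0 \<le> c \<and> c \<le> 2"
proof -
  obtain v where v: "v \<noteq> 0" "norm_lap E *v v = c *\<^sub>R v" using assms(3) unfolding eigenvalues_def by blast
  have vp: "v \<bullet> v > 0" using v(1) by simp
  have "v \<bullet> (norm_lap E *v v) = c * (v \<bullet> v)" using v(2) by simp
  with nl_quad[OF sg dp, of v] vp show ?thesis by (auto simp: zero_le_mult_iff)
qed

lemma nl_diag:
  assumes sg: "simple_graph E" and dp: "\<And>u. degree E u > 0"
  shows "unitv i \<bullet> (norm_lap E *v unitv i) = 1"
proof -
  have nE: "\<not> E i i" using sg unfolding simple_graph_def by blast
  have "unitv i \<bullet> (norm_lap E *v unitv i) = (Dhi E *v unitv i) \<bullet> (lap_mat E *v (Dhi E *v unitv i))"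
    unfolding nl_mv Dhi_def by (metis diag_inner inner_commute)
  also have "Dhi E *v unitv i = (1 / sqrt (degree E i)) *\<^sub>R unitv i"
    by (simp add: Dhi_def diag_mv unitv_def vec_eq_iff)
  also have "((1 / sqrt (degree E i)) *\<^sub>R unitv i) \<bullet> (lap_mat E *v ((1 / sqrt (degree E i)) *\<^sub>R unitv i))
     = (1 / sqrt (degree E i))^2 * (lap_mat E *v unitv i) $ i"
    by (simp add: matrix_vector_mult_scaleR unitv_def inner_vec_def power2_eq_square if_distrib if_distribR cong: if_cong)
  also have "(lap_mat E *v unitv i) $ i = degree E i"
    using nE by (simp add: lap_mat_def matrix_vector_mult_diff_rdistrib deg_mv adj_mv unitv_def if_distrib if_distribR cong: if_cong)
  finally show ?thesis using dp[of i] by (simp add: power_divide)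
qed

definition Jm :: "real^'n::finite^'n" where "Jm = (\<chi> i j. 1)"

lemma Jm_mv: "Jm *v v = (\<chi> i. \<Sum>j\<in>UNIV. v $ j)"
  by (simp add: Jm_def matrix_vector_mult_def)

lemma Jm_transpose: "transpose Jm = Jm"
  by (simp add: Jm_def transpose_def)

lemma JmJm: "Jm ** Jm = real CARD('n::finite) *\<^sub>R (Jm :: real^'n^'n)"
  by (simp add: Jm_def matrix_matrix_mult_def vec_eq_iff)

lemma lap_sym:
  assumes sg: "simple_graph E"
  shows "transpose (lap_mat E) = lap_mat E"
  using adj_sym[OF sg]
  by (simp add: transpose_def vec_eq_iff lap_mat_def deg_mat_def diag_mat_def adj_mat_def)

lemma lap_Jm: "lap_mat E ** Jm = 0"
proof -
  have "(\<Sum>k\<in>UNIV. lap_mat E $ i $ k) = 0" for i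
    by (simp add: lap_mat_def deg_mat_def diag_mat_def adj_mat_def sum_subtractf deg_sum)
  then show ?thesis by (simp add: Jm_def matrix_matrix_mult_def vec_eq_iff)
qed

lemma Jm_lap:
  assumes sg: "simple_graph E"
  shows "Jm ** lap_mat E = 0"
proof -
  have "transpose (Jm ** lap_mat E) = 0"
    by (simp add: matrix_transpose_mul lap_sym[OF sg] Jm_transpose lap_Jm)
  then show ?thesis by (metis transpose_transpose transpose_mat mat_0)
qed

lemma lap_ker:
  fixes E :: "'n::finite \<Rightarrow> 'n \<Rightarrow> bool"
  assumes sg: "simple_graph E" and cg: "connected_graph E" and q: "v \<bullet> (lap_mat E *v v) = 0"
  shows "v $ i = v $ j"
proof -
  define a where "a \<equiv> \<lambda>i j. if E i j then 1 else (0::real)"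
  define f where "f \<equiv> \<lambda>i j. a i j * (v$i - v$j)^2"
  have f0: "0 \<le> f i j" for i j unfolding f_def a_def by simp
  have "(\<Sum>i\<in>UNIV. \<Sum>j\<in>UNIV. f i j) = 0"
    using quad_forms(1)[OF sg, of v] q unfolding a_def f_def by simp
  hence z1: "\<forall>i\<in>UNIV. (\<Sum>j\<in>UNIV. f i j) = 0"
    using sum_nonneg_eq_0_iff[of UNIV "\<lambda>i. \<Sum>j\<in>UNIV. f i j"] f0 by (simp add: sum_nonneg)
  have z: "f x y = 0" for x y
  proof -
    have "(\<Sum>j\<in>UNIV. f x j) = 0" using z1 by blast
    hence "\<forall>j\<in>UNIV. f x j = 0" using sum_nonneg_eq_0_iff[of UNIV "\<lambda>j. f x j"] f0 by simp
    thus ?thesis by blast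
  qed
  have edge: "v $ x = v $ y" if "E x y" for x y
  proof -
    have "a x y * (v$x - v$y)^2 = 0" using z[of x y] unfolding f_def .
    then show ?thesis using that by (simp add: a_def)
  qed
  have "E\<^sup>*\<^sup>* i j" using cg unfolding connected_graph_def by blast
  then show ?thesis
  proof (induction rule: rtranclp_induct)
    case base then show ?case by simp
  next
    case (step y z) then show ?case using edge[of y z] by simp
  qed
qed

lemma M_inj:
  fixes E :: "'n::finite \<Rightarrow> 'n \<Rightarrow> bool"
  assumes sg: "simple_graph E" and cg: "connected_graph E"
    and Mv: "(lap_mat E + (1 / real CARD('n)) *\<^sub>R Jm) *v v = 0"
  shows "v = 0"
proof -
  let ?n = "real CARD('n)"
  have np: "?n > 0" by simp
  have vJ: "v \<bullet> (Jm *v v) = (\<Sum>j\<in>UNIV. v $ j)^2"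
    by (simp add: Jm_mv inner_vec_def power2_eq_square sum_distrib_right)
  have "0 = v \<bullet> ((lap_mat E + (1 / ?n) *\<^sub>R Jm) *v v)" using Mv by simp
  also have "\<dots> = v \<bullet> (lap_mat E *v v) + (1 / ?n) * (\<Sum>j\<in>UNIV. v $ j)^2"
    by (simp add: matrix_vector_mult_add_rdistrib inner_add_right vJ scaleR_matrix_vector_assoc[symmetric])
  finally have e: "v \<bullet> (lap_mat E *v v) + (1 / ?n) * (\<Sum>j\<in>UNIV. v $ j)^2 = 0" by simp
  have p1: "0 \<le> v \<bullet> (lap_mat E *v v)" by (rule lap_psd[OF sg])
  have p2: "0 \<le> (1 / ?n) * (\<Sum>j\<in>UNIV. v $ j)^2" by simp
  have q: "v \<bullet> (lap_mat E *v v) = 0" using e p1 p2 by linarith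
  have "(\<Sum>j\<in>UNIV. v $ j)^2 = 0" using e q np by simp
  hence s: "(\<Sum>j\<in>UNIV. v $ j) = 0" by simp
  fix i0
  define w where "w = v $ i0"
  have c: "v $ j = w" for j unfolding w_def using lap_ker[OF sg cg q] .
  have fe: "(\<lambda>j. v $ j) = (\<lambda>j. w)" by (rule ext) (rule c)
  have "(\<Sum>j\<in>UNIV. v $ j) = (\<Sum>j\<in>(UNIV::'n set). w)" by (simp only: fe)
  also have "\<dots> = ?n * w" by simp
  finally have "w = 0" using s np by simp
  hence "\<forall>j. v $ j = 0" using c by simp
  then show "v = 0" by (simp add: vec_eq_iff)
qed

lemma pinv_lap:
  fixes E :: "'n::finite \<Rightarrow> 'n \<Rightarrow> bool"
  assumes sg: "simple_graph E" and cg: "connected_graph E"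
  shows "lap_mat E ** pinv (lap_mat E) = mat 1 - (1 / real CARD('n)) *\<^sub>R Jm"
proof -
  let ?n = "real CARD('n)"
  let ?L = "lap_mat E"
  define M where "M = ?L + (1 / ?n) *\<^sub>R Jm"
  have np: "?n > 0" by simp
  have "\<forall>x. M *v x = 0 \<longrightarrow> x = 0" using M_inj[OF sg cg] unfolding M_def by blast
  then obtain Mi where Mi1: "Mi ** M = mat 1"
    using matrix_left_invertible_ker[of M, THEN iffD2] by blast
  have Mi2: "M ** Mi = mat 1" using matrix_left_right_inverse[THEN iffD2, OF Mi1] .
  have MJ: "M ** Jm = Jm" unfolding M_def
    using np by (simp add: mm_add_r mm_scale_l lap_Jm JmJm)
  have JM: "Jm ** M = Jm" unfolding M_def
    using np by (simp add: matrix_add_ldistrib mm_scale_r Jm_lap[OF sg] JmJm)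
  have MiJ: "Mi ** Jm = Jm" by (metis MJ Mi1 matrix_mul_assoc matrix_mul_lid)
  have JMi: "Jm ** Mi = Jm" by (metis JM Mi2 matrix_mul_assoc matrix_mul_rid)
  have LM: "?L = M - (1 / ?n) *\<^sub>R Jm" unfolding M_def by simp
  define X where "X = Mi - (1 / ?n) *\<^sub>R (Jm :: real^'n^'n)"
  define P where "P = (mat 1 :: real^'n^'n) - (1 / ?n) *\<^sub>R Jm"
  have LX: "?L ** X = P"
  proof -
    have "?L ** X = ?L ** Mi" unfolding X_def by (simp add: mm_diff_l mm_scale_r lap_Jm)
    also have "\<dots> = P" unfolding P_def by (subst LM) (simp add: mm_diff_r mm_scale_l Mi2 JMi)
    finally show ?thesis .
  qed
  have XL: "X ** ?L = P"
  proof -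
    have "X ** ?L = Mi ** ?L" unfolding X_def by (simp add: mm_diff_r mm_scale_l Jm_lap[OF sg])
    also have "\<dots> = P" unfolding P_def by (subst LM) (simp add: mm_diff_l mm_scale_r Mi1 MiJ)
    finally show ?thesis .
  qed
  have PT: "transpose P = P" unfolding P_def by (simp add: transpose_diff transpose_scalar Jm_transpose)
  have JX: "Jm ** X = 0" unfolding X_def using np by (simp add: mm_diff_l mm_scale_r JMi JmJm)
  have c1: "?L ** X ** ?L = ?L" unfolding LX P_def by (simp add: mm_diff_r mm_scale_l Jm_lap[OF sg])
  have c2: "X ** ?L ** X = X" unfolding XL P_def by (simp add: mm_diff_r mm_scale_l JX)
  have "pinv ?L = X"
    unfolding pinv_def
  proof (rule the_equality)
    show "?L ** X ** ?L = ?L \<and> X ** ?L ** X = X \<and> transpose (?L ** X) = ?L ** X \<and> transpose (X ** ?L) = X ** ?L"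
      using c1 c2 LX XL PT by (simp only:)
  next
    fix Y assume h: "?L ** Y ** ?L = ?L \<and> Y ** ?L ** Y = Y \<and> transpose (?L ** Y) = ?L ** Y \<and> transpose (Y ** ?L) = Y ** ?L"
    have t1: "transpose (?L ** X) = ?L ** X" by (simp only: LX PT)
    have t2: "transpose (X ** ?L) = X ** ?L" by (simp only: XL PT)
    from h have h1: "?L ** Y ** ?L = ?L" and h2: "Y ** ?L ** Y = Y" and h3: "transpose (?L ** Y) = ?L ** Y"
      and h4: "transpose (Y ** ?L) = Y ** ?L" by blast+
    show "Y = X" by (rule penrose_unique[OF h1 h2 h3 h4 c1 c2 t1 t2])
  qed
  then have "?L ** pinv ?L = P" using LX by (simp only:)
  then show ?thesis unfolding P_def .
qed

lemma sqrt_lem: "(d::real) > 0 \<Longrightarrow> d * c / sqrt d = sqrt d * c"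
  by (simp add: field_simps)

lemma inv_sqrt_lem:
  assumes "(d::real) > 0" shows "1 / d * sqrt d = 1 / sqrt d"
proof -
  have "sqrt d * sqrt d = d" using assms by simp
  then show ?thesis using assms by (metis divide_divide_eq_right divide_self_if mult_cancel_right1 nonzero_mult_div_cancel_right real_sqrt_eq_zero_cancel_iff times_divide_eq_left times_divide_eq_right less_irrefl)
qed

theorem lemma3p2:
  fixes E :: "'n::finite \<Rightarrow> 'n \<Rightarrow> bool" and s t :: 'n and \<epsilon> :: real and L :: nat
  assumes "simple_graph E" and "connected_graph E" and "CARD('n) \<ge> 2"
    and "s \<noteq> t" and "0 < \<epsilon>" and "\<epsilon> < 1"
    and "real L \<ge> 2 * cond_num (norm_lap E) * ln (real CARD('n) / \<epsilon>)"
  shows "approx_eps \<epsilon> (trunc_eff_res E L s t) (eff_res E s t)"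
proof -
  note sg = assms(1) and cg = assms(2) and card2 = assms(3)
  have dp: "\<And>u. degree E u > 0" using deg_pos[OF cg card2] .
  define NL where "NL = norm_lap E"
  have symNL: "transpose NL = NL" unfolding NL_def by (rule nl_sym[OF sg])
  obtain B mu where B: "finite B" "\<forall>b\<in>B. norm b = 1 \<and> NL *v b = mu b *\<^sub>R b"
    "pairwise orthogonal B" "\<forall>x. x = (\<Sum>b\<in>B. (x \<bullet> b) *\<^sub>R b)"
    using spectral[OF symNL] by blast
  have dotexp: "x \<bullet> y = (\<Sum>b\<in>B. (x \<bullet> b) * (y \<bullet> b))" for x y
  proof -
    have "x \<bullet> y = x \<bullet> (\<Sum>b\<in>B. (y \<bullet> b) *\<^sub>R b)" using B(4) by metis
    also have "\<dots> = (\<Sum>b\<in>B. (x \<bullet> b) * (y \<bullet> b))" by (simp add: inner_sum_right mult.commute)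
    finally show ?thesis .
  qed
  have coef: "(NL *v x) \<bullet> b = mu b * (x \<bullet> b)" if "b \<in> B" for x b
    using sym_dot[OF symNL, of x b] B(2) that by simp
  have quadexp: "x \<bullet> (NL *v x) = (\<Sum>b\<in>B. (x \<bullet> b)^2 * mu b)" for x
    by (subst dotexp) (simp add: coef power2_eq_square mult_ac cong: sum.cong)
  have mu_eig: "mu b \<in> eigenvalues NL" if "b \<in> B" for b
  proof -
    have "b \<noteq> 0" using B(2) that by auto
    then show ?thesis unfolding eigenvalues_def using B(2) that by blast
  qed
  have eig_sub: "eigenvalues NL \<subseteq> mu ` B"
  proof
    fix c assume "c \<in> eigenvalues NL"
    then obtain v where v: "v \<noteq> 0" "NL *v v = c *\<^sub>R v" unfolding eigenvalues_def by blast
    show "c \<in> mu ` B"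
    proof (rule ccontr)
      assume nc: "c \<notin> mu ` B"
      have "v \<bullet> b = 0" if "b \<in> B" for b
      proof -
        have "c * (v \<bullet> b) = mu b * (v \<bullet> b)" using coef[OF that, of v] v(2) by simp
        moreover have "c \<noteq> mu b" using nc that by blast
        ultimately show ?thesis by simp
      qed
      hence "v = 0" using B(4) by (metis (no_types, lifting) scale_eq_0_iff sum.neutral)
      thus False using v(1) by simp
    qed
  qed
  have fin: "finite (eigenvalues NL)" using finite_subset[OF eig_sub] B(1) by blast
  have rng: "0 \<le> c \<and> c \<le> 2" if "c \<in> eigenvalues NL" for c
    using nl_eig_range[OF sg dp] that unfolding NL_def by blast
  obtain b0 where b0: "b0 \<in> B" "mu b0 \<ge> 1"
  proof -
    let ?e = "unitv s :: real^'n"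
    have d1: "?e \<bullet> (NL *v ?e) = 1" unfolding NL_def by (rule nl_diag[OF sg dp])
    have d2: "?e \<bullet> ?e = 1" by (simp add: unitv_def inner_vec_def if_distrib if_distribR cong: if_cong)
    have s1: "(\<Sum>b\<in>B. (?e \<bullet> b)^2 * mu b) = 1" using d1 quadexp by simp
    have s2: "(\<Sum>b\<in>B. (?e \<bullet> b)^2) = 1" using d2 dotexp[of ?e ?e] by (simp add: power2_eq_square)
    show ?thesis
    proof (rule ccontr)
      assume "\<not> ?thesis"
      hence lt: "\<forall>b\<in>B. mu b < 1" using that by force
      have "(\<Sum>b\<in>B. (?e \<bullet> b)^2 * (1 - mu b)) = (\<Sum>b\<in>B. (?e \<bullet> b)^2) - (\<Sum>b\<in>B. (?e \<bullet> b)^2 * mu b)"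
        by (simp add: algebra_simps sum_subtractf)
      also have "\<dots> = 0" using s1 s2 by simp
      finally have z: "(\<Sum>b\<in>B. (?e \<bullet> b)^2 * (1 - mu b)) = 0" .
      have nn: "0 \<le> (?e \<bullet> b)^2 * (1 - mu b)" if "b \<in> B" for b
      proof -
        have "mu b < 1" using lt that by blast
        then show ?thesis by (intro mult_nonneg_nonneg) auto
      qed
      have "\<forall>b\<in>B. (?e \<bullet> b)^2 * (1 - mu b) = 0"
        using sum_nonneg_eq_0_iff[OF B(1), of "\<lambda>b. (?e \<bullet> b)^2 * (1 - mu b)"] z nn by blast
      hence "\<forall>b\<in>B. (?e \<bullet> b)^2 = 0" using lt by (metis less_irrefl mult_eq_0_iff right_minus_eq)
      hence "(\<Sum>b\<in>B. (?e \<bullet> b)^2) = 0" by simp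
      thus False using s2 by simp
    qed
  qed
  define lmax where "lmax = lambda_max NL"
  define l2 where "l2 = lambda_2 NL"
  have lmax1: "lmax \<ge> 1"
  proof -
    have "mu b0 \<le> lmax" unfolding lmax_def lambda_max_def using Max_ge[OF fin mu_eig[OF b0(1)]] .
    thus ?thesis using b0 by simp
  qed
  have fin2: "finite (eigenvalues NL - {0})" using fin by simp
  have ne2: "mu b0 \<in> eigenvalues NL - {0}" using mu_eig[OF b0(1)] b0(2) by simp
  have l2in: "l2 \<in> eigenvalues NL - {0}" unfolding l2_def lambda_2_def
    using Min_in[OF fin2] ne2 by blast
  have l2pos: "0 < l2" and l2le: "l2 \<le> 2" using rng l2in by force+
  have l2min: "l2 \<le> mu b" if "b \<in> B" "mu b \<noteq> 0" for b
    unfolding l2_def lambda_2_def using Min_le[OF fin2] mu_eig[OF that(1)] that(2) by simp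
  define \<rho> where "\<rho> = 1 - l2 / 2"
  have rho0: "0 \<le> \<rho>" and rho1: "\<rho> \<le> 1" unfolding \<rho>_def using l2pos l2le by auto
  have rhoeps: "\<rho> ^ (L+1) \<le> \<epsilon>"
  proof -
    let ?n = "real CARD('n)"
    have n1: "?n \<ge> 1" using card2 by simp
    have en: "\<epsilon> \<le> ?n" using n1 assms(6) by linarith
    have "1 \<le> ?n / \<epsilon>" using en assms(5) by (simp add: divide_simps)
    hence lnpos: "0 \<le> ln (?n / \<epsilon>)" by simp
    have lneps: "ln (?n / \<epsilon>) \<ge> - ln \<epsilon>"
    proof -
      have "ln (?n / \<epsilon>) = ln ?n - ln \<epsilon>" using n1 assms(5) by (simp add: ln_div)
      moreover have "ln ?n \<ge> 0" using n1 by simp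
      ultimately show ?thesis by simp
    qed
    have hL: "real L \<ge> 2 * (lmax / l2) * ln (?n / \<epsilon>)"
      using assms(7) unfolding cond_num_def lmax_def l2_def NL_def .
    have "real L * (l2 / 2) \<ge> lmax * ln (?n / \<epsilon>)"
    proof -
      have "real L * (l2 / 2) \<ge> 2 * (lmax / l2) * ln (?n / \<epsilon>) * (l2 / 2)"
        using hL l2pos by (intro mult_right_mono) auto
      also have "2 * (lmax / l2) * ln (?n / \<epsilon>) * (l2 / 2) = lmax * ln (?n / \<epsilon>)"
        using l2pos by (simp add: field_simps)
      finally show ?thesis .
    qed
    moreover have "lmax * ln (?n / \<epsilon>) \<ge> ln (?n / \<epsilon>)"
      using lmax1 lnpos by (metis mult_le_cancel_right1 order.trans less_le_not_le mult_right_mono mult_1)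
    ultimately have key: "real L * (l2 / 2) \<ge> - ln \<epsilon>" using lneps by linarith
    have "\<rho> ^ (L+1) \<le> \<rho> ^ L" by (intro power_decreasing) (simp_all add: rho0 rho1)
    also have "\<rho> ^ L \<le> exp (- l2 / 2) ^ L"
    proof (rule power_mono)
      show "\<rho> \<le> exp (- l2 / 2)" unfolding \<rho>_def using exp_ge_add_one_self[of "- l2 / 2"] by simp
    qed (rule rho0)
    also have "\<dots> = exp (real L * (- l2 / 2))" by (rule exp_of_nat_mult[symmetric])
    also have "\<dots> \<le> exp (ln \<epsilon>)" using key by simp
    also have "\<dots> = \<epsilon>" using assms(5) by simp
    finally show ?thesis .
  qed
  define bst where "bst = unitv s - unitv t"
  define x where "x = Dhi E *v bst"
  have bx: "bst = Dh E *v x" unfolding x_def using Dh_Dhi(1)[OF dp] by simp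
  define y where "y = pinv (lap_mat E) *v bst"
  have Jb: "Jm *v bst = 0"
  proof -
    have "(\<Sum>j\<in>UNIV. bst $ j) = 0"
      by (simp add: bst_def unitv_def sum_subtractf)
    thus ?thesis by (simp add: Jm_mv vec_eq_iff)
  qed
  have Ly: "lap_mat E *v y = bst"
    unfolding y_def matrix_vector_mul_assoc pinv_lap[OF sg cg]
    by (simp add: matrix_vector_mult_diff_rdistrib scaleR_matrix_vector_assoc[symmetric] Jb)
  have eff: "eff_res E s t = bst \<bullet> y" unfolding eff_res_def y_def bst_def Let_def ..
  define z where "z = Dh E *v y"
  have yz: "y = Dhi E *v z" unfolding z_def using Dh_Dhi(2)[OF dp] by simp
  have NLz: "NL *v z = x" unfolding NL_def nl_mv z_def Dh_Dhi(2)[OF dp] Ly x_def ..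
  have cx: "x \<bullet> b = mu b * (z \<bullet> b)" if "b \<in> B" for b
    using coef[OF that, of z] NLz by simp
  have eff2: "eff_res E s t = (\<Sum>b\<in>B. mu b * (z \<bullet> b)^2)"
  proof -
    have "bst \<bullet> y = x \<bullet> z"
    proof -
      have "bst \<bullet> y = (Dh E *v x) \<bullet> (Dhi E *v z)" using bx yz by simp
      also have "\<dots> = x \<bullet> (Dh E *v (Dhi E *v z))" unfolding Dh_def by (rule diag_inner)
      also have "\<dots> = x \<bullet> z" using Dh_Dhi(1)[OF dp] by simp
      finally show ?thesis .
    qed
    also have "\<dots> = (\<Sum>b\<in>B. (x \<bullet> b) * (z \<bullet> b))" by (rule dotexp)
    also have "\<dots> = (\<Sum>b\<in>B. mu b * (z \<bullet> b)^2)"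
      by (rule sum.cong) (simp_all add: cx power2_eq_square)
    finally show ?thesis using eff by simp
  qed
  define Q where "Q = (1/2) *\<^sub>R (mat 1 :: real^'n^'n) + (1/2) *\<^sub>R walk_mat E"
  define sb where "sb = (\<lambda>b. 1 - mu b / 2)"
  have Qeig: "Q *v (Dh E *v b) = sb b *\<^sub>R (Dh E *v b)" if "b \<in> B" for b
  proof -
    have w1: "diag_mat (\<lambda>u. 1 / degree E u) *v (Dh E *v b) = Dhi E *v b"
      unfolding Dh_def Dhi_def diag_diag
    proof -
      have "(\<lambda>i. 1 / degree E i * sqrt (degree E i)) = (\<lambda>i. 1 / sqrt (degree E i))"
      proof
        fix i
        show "1 / degree E i * sqrt (degree E i) = 1 / sqrt (degree E i)"
          using dp[of i] by (rule inv_sqrt_lem)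
      qed
      then show "diag_mat (\<lambda>i. 1 / degree E i * sqrt (degree E i)) *v b = diag_mat (\<lambda>u. 1 / sqrt (degree E u)) *v b"
        by simp
    qed
    have w2: "deg_mat E *v (Dhi E *v b) = Dh E *v b"
      using dp by (simp add: deg_mat_def Dhi_def Dh_def diag_mv vec_eq_iff sqrt_lem)
    have w3: "lap_mat E *v (Dhi E *v b) = mu b *\<^sub>R (Dh E *v b)"
    proof -
      have "lap_mat E *v (Dhi E *v b) = Dh E *v (NL *v b)"
        unfolding NL_def nl_mv Dh_Dhi(1)[OF dp] ..
      also have "\<dots> = mu b *\<^sub>R (Dh E *v b)" using B(2) that by (simp add: matrix_vector_mult_scaleR)
      finally show ?thesis .
    qed
    have walk: "walk_mat E *v (Dh E *v b) = (1 - mu b) *\<^sub>R (Dh E *v b)"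
    proof -
      have "walk_mat E *v (Dh E *v b) = adj_mat E *v (Dhi E *v b)"
        unfolding walk_mat_def matrix_vector_mul_assoc[symmetric] w1 ..
      also have "adj_mat E = deg_mat E - lap_mat E" unfolding lap_mat_def by simp
      also have "(deg_mat E - lap_mat E) *v (Dhi E *v b) = Dh E *v b - mu b *\<^sub>R (Dh E *v b)"
        by (simp add: matrix_vector_mult_diff_rdistrib w2 w3)
      finally show ?thesis by (simp add: algebra_simps)
    qed
    show ?thesis unfolding Q_def sb_def
      by (simp add: matrix_vector_mult_add_rdistrib scaleR_matrix_vector_assoc[symmetric] walk algebra_simps)
  qed
  have mpQ: "mpow Q l *v (Dh E *v b) = (sb b ^ l) *\<^sub>R (Dh E *v b)" if "b \<in> B" for b l
  proof (induction l)
    case 0 then show ?case by simp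
  next
    case (Suc l)
    have "mpow Q (Suc l) *v (Dh E *v b) = Q *v (mpow Q l *v (Dh E *v b))"
      by (simp add: matrix_vector_mul_assoc matrix_mul_assoc)
    also have "\<dots> = (sb b ^ Suc l) *\<^sub>R (Dh E *v b)"
      using Suc Qeig[OF that] by (simp add: matrix_vector_mult_scaleR)
    finally show ?case .
  qed
  have bexp: "bst = (\<Sum>b\<in>B. (x \<bullet> b) *\<^sub>R (Dh E *v b))"
  proof -
    have "bst = Dh E *v (\<Sum>b\<in>B. (x \<bullet> b) *\<^sub>R b)" using bx B(4) by metis
    also have "\<dots> = (\<Sum>b\<in>B. (x \<bullet> b) *\<^sub>R (Dh E *v b))"
      by (simp add: mv_sum matrix_vector_mult_scaleR)
    finally show ?thesis .
  qed
  have mpb: "mpow Q l *v bst = (\<Sum>b\<in>B. ((x \<bullet> b) * sb b ^ l) *\<^sub>R (Dh E *v b))" for l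
  proof -
    have "mpow Q l *v bst = (\<Sum>b\<in>B. (x \<bullet> b) *\<^sub>R (mpow Q l *v (Dh E *v b)))"
      by (subst bexp) (simp add: mv_sum matrix_vector_mult_scaleR)
    also have "\<dots> = (\<Sum>b\<in>B. ((x \<bullet> b) * sb b ^ l) *\<^sub>R (Dh E *v b))"
      by (rule sum.cong) (simp_all add: mpQ)
    finally show ?thesis .
  qed
  have Dib: "diag_mat (\<lambda>u. 1 / degree E u) *v bst = Dhi E *v x"
  proof -
    have "(\<lambda>i. 1 / degree E i * sqrt (degree E i)) = (\<lambda>i. 1 / sqrt (degree E i))"
    proof
      fix i
      show "1 / degree E i * sqrt (degree E i) = 1 / sqrt (degree E i)"
        using dp[of i] by (rule inv_sqrt_lem)
    qed
    then show ?thesis unfolding bx Dh_def Dhi_def diag_diag by simp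
  qed
  have DhDhi_inner: "(Dhi E *v x) \<bullet> (Dh E *v b) = x \<bullet> b" for b
  proof -
    have "(Dhi E *v x) \<bullet> (Dh E *v b) = x \<bullet> (Dhi E *v (Dh E *v b))" unfolding Dhi_def by (rule diag_inner)
    thus ?thesis using Dh_Dhi(2)[OF dp] by simp
  qed
  have tr: "trunc_eff_res E L s t = (\<Sum>b\<in>B. (x \<bullet> b)^2 * ((1/2) * (\<Sum>l\<in>{0..L}. sb b ^ l)))"
  proof -
    have "trunc_eff_res E L s t = (1/2) * (bst \<bullet> (diag_mat (\<lambda>u. 1 / degree E u) *v (\<Sum>l\<in>{0..L}. mpow Q l *v bst)))"
      unfolding trunc_eff_res_def Let_def bst_def[symmetric] Q_def[symmetric]
      by (simp add: matrix_vector_mul_assoc[symmetric] sum_mv)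
    also have "bst \<bullet> (diag_mat (\<lambda>u. 1 / degree E u) *v (\<Sum>l\<in>{0..L}. mpow Q l *v bst))
        = (Dhi E *v x) \<bullet> (\<Sum>l\<in>{0..L}. mpow Q l *v bst)"
      by (metis Dib diag_inner inner_commute)
    also have "\<dots> = (\<Sum>l\<in>{0..L}. \<Sum>b\<in>B. (x \<bullet> b) * sb b ^ l * (x \<bullet> b))"
      by (simp add: mpb inner_sum_right DhDhi_inner)
    also have "\<dots> = (\<Sum>b\<in>B. \<Sum>l\<in>{0..L}. (x \<bullet> b)^2 * sb b ^ l)"
      by (subst sum.swap) (simp add: power2_eq_square mult_ac)
    finally show ?thesis by (simp add: sum_distrib_left sum_distrib_right mult_ac)
  qed
  define tb where "tb = (\<lambda>b. mu b * (z \<bullet> b)^2)"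
  have tr2: "trunc_eff_res E L s t = (\<Sum>b\<in>B. tb b * (1 - sb b ^ (L+1)))"
    unfolding tr
  proof (rule sum.cong[OF refl])
    fix b assume bB: "b \<in> B"
    have gp: "(1 - sb b) * (\<Sum>l\<in>{0..L}. sb b ^ l) = 1 - sb b ^ (L+1)"
      using sum_gp_basic[of "sb b" L] by (simp add: atLeast0AtMost)
    have mb: "mu b / 2 = 1 - sb b" unfolding sb_def by simp
    have "(x \<bullet> b)^2 * ((1/2) * (\<Sum>l\<in>{0..L}. sb b ^ l)) = mu b * (z \<bullet> b)^2 * ((mu b / 2) * (\<Sum>l\<in>{0..L}. sb b ^ l))"
      by (simp add: cx[OF bB] power2_eq_square mult_ac)
    also have "\<dots> = mu b * (z \<bullet> b)^2 * ((1 - sb b) * (\<Sum>l\<in>{0..L}. sb b ^ l))"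
      by (simp only: mb)
    also have "\<dots> = tb b * (1 - sb b ^ (L+1))"
      by (simp only: gp tb_def)
    finally show "(x \<bullet> b)^2 * ((1/2) * (\<Sum>l\<in>{0..L}. sb b ^ l)) = tb b * (1 - sb b ^ (L+1))" .
  qed
  have eff3: "eff_res E s t = (\<Sum>b\<in>B. tb b)" unfolding tb_def by (rule eff2)
  have trm: "(1 - \<epsilon>) * tb b \<le> tb b * (1 - sb b ^ (L+1)) \<and> tb b * (1 - sb b ^ (L+1)) \<le> (1 + \<epsilon>) * tb b"
    if bB: "b \<in> B" for b
  proof (cases "mu b = 0")
    case True then show ?thesis unfolding tb_def by simp
  next
    case False
    have mr: "0 \<le> mu b \<and> mu b \<le> 2" using rng[OF mu_eig[OF bB]] .
    have tb0: "0 \<le> tb b" unfolding tb_def using mr by simp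
    have s0: "0 \<le> sb b" unfolding sb_def using mr by simp
    have srho: "sb b \<le> \<rho>" unfolding sb_def \<rho>_def using l2min[OF bB False] by simp
    have "sb b ^ (L+1) \<le> \<rho> ^ (L+1)" by (rule power_mono[OF srho s0])
    hence se: "sb b ^ (L+1) \<le> \<epsilon>" using rhoeps by simp
    have sp: "0 \<le> sb b ^ (L+1)" using s0 by simp
    have "(1 - \<epsilon>) * tb b \<le> (1 - sb b ^ (L+1)) * tb b" using se tb0 by (intro mult_right_mono) auto
    moreover have "(1 - sb b ^ (L+1)) * tb b \<le> (1 + \<epsilon>) * tb b" using sp tb0 assms(5) by (intro mult_right_mono) auto
    ultimately show ?thesis by (simp add: mult.commute)
  qed
  show ?thesis unfolding approx_eps_def tr2 eff3
  proof
    show "(1 - \<epsilon>) * (\<Sum>b\<in>B. tb b) \<le> (\<Sum>b\<in>B. tb b * (1 - sb b ^ (L+1)))"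
      unfolding sum_distrib_left using trm by (intro sum_mono) blast
    show "(\<Sum>b\<in>B. tb b * (1 - sb b ^ (L+1))) \<le> (1 + \<epsilon>) * (\<Sum>b\<in>B. tb b)"
      unfolding sum_distrib_left using trm by (intro sum_mono) blast
  qed
qed

end
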